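(* Let $H$ be an $r$-graph with $h$ vertices. If $H$ is not $2$-locally large, then $C_r(n,H)\le 2r+1$ for all $n$. If $H$ is $2$-locally large, then $$C_r(n,H)\ge c\left(\frac{\log^{(r)}(n)}{\log^{(r+1)}(n)}\right)^{\frac{1}{(r+1)^2}}$$ for some constant $c=c(r,h)>0$, where $\log^{(s)}(n)$ denotes the $s$-fold iterated logarithm of $n$.
   Context: An $r$-graph is an $r$-uniform hypergraph; $K_n^{(r)}$ is the complete $r$-graph on $n$ vertices. A copy of an $r$-graph $H$ in $K_n^{(r)}$ is a subhypergraph isomorphic to $H$. An $(n,r,H)$-local coloring with $k$ colors is a family of edge-colorings $f_v:E(K_n^{(r)})\to[k]$, one per vertex $v$, such that for every copy $T$ of $H$ there is $u\in V(T)$ with $f_u$ injective on $E(T)$. $C_r(n,H)$ is the minimum such $k$. Let $H$ be an $r$-graph on $m$ vertices and $\sigma:V(H)\to[m]$ a bijection. For $x\in V(H)$ and $1\le i\le r$, $T_x^i$ is the set of edges $e\ni x$ such that $\sigma(x)$ is the $i$-th smallest of the values $\sigma(v)$, $v\in e$. For $r+1\le i\le 2r+1$, $T_x^i$ is the set of edges $e\not\ni x$ such that $\sigma(x)$ is the $(i-r)$-th smallest among the values $\sigma(v)$, $v\in e\cup\{x\}$. $H$ is $2$-locally large if there exists a bijection $\sigma:V(H)\to[m]$ such that for every vertex $x\in V(H)$ some $T_x^i$, $i\in[2r+1]$, contains at least two edges. *)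

theory Defs
  imports Complex_Main
begin

definition r_graph :: "nat \<Rightarrow> nat set \<Rightarrow> nat set set \<Rightarrow> bool" where
  "r_graph r V E \<longleftrightarrow> finite V \<and> (\<forall>e\<in>E. e \<subseteq> V \<and> card e = r)"

text \<open>For r+1 \<le> i \<le> 2r+1: edges not containing x such that sigma x is the (i-r)-th
  smallest among the values on e \<union> {x}.\<close>
definition T_set :: "nat \<Rightarrow> (nat \<Rightarrow> nat) \<Rightarrow> nat set set \<Rightarrow> nat \<Rightarrow> nat \<Rightarrow> nat set set" where
  "T_set r \<sigma> E x i =
     (if i \<le> r then {e \<in> E. x \<in> e \<and> card {v \<in> e. \<sigma> v < \<sigma> x} + 1 = i}
      else {e \<in> E. x \<notin> e \<and> card {v \<in> e. \<sigma> v < \<sigma> x} + 1 = i - r})"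

definition two_locally_large :: "nat \<Rightarrow> nat set \<Rightarrow> nat set set \<Rightarrow> bool" where
  "two_locally_large r V E \<longleftrightarrow>
     (\<exists>\<sigma>. bij_betw \<sigma> V {1..card V} \<and>
          (\<forall>x\<in>V. \<exists>i\<in>{1..2*r+1}. card (T_set r \<sigma> E x i) \<ge> 2))"

text \<open>An (n,r,H)-local colouring with k colours: K_n^(r) has vertex set {0..<n};
  f v is the colouring of vertex v. Copies of H = (V,E) are exactly the images of H
  under injections phi : V -> {0..<n}; the copy has vertex set phi ` V and edge set
  the images of the edges.\<close>
definition local_coloring :: "nat \<Rightarrow> nat \<Rightarrow> nat set \<Rightarrow> nat set set \<Rightarrow> nat \<Rightarrow> (nat \<Rightarrow> nat set \<Rightarrow> nat) \<Rightarrow> bool" where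
  "local_coloring n r V E k f \<longleftrightarrow>
     (\<forall>v<n. \<forall>e. e \<subseteq> {..<n} \<and> card e = r \<longrightarrow> f v e \<in> {1..k}) \<and>
     (\<forall>\<phi>. inj_on \<phi> V \<and> \<phi> ` V \<subseteq> {..<n} \<longrightarrow>
        (\<exists>u\<in>\<phi> ` V. inj_on (f u) ((\<lambda>e. \<phi> ` e) ` E)))"

definition C_num :: "nat \<Rightarrow> nat \<Rightarrow> nat set \<Rightarrow> nat set set \<Rightarrow> nat" where
  "C_num r n V E = (LEAST k. \<exists>f. local_coloring n r V E k f)"

definition iter_log :: "nat \<Rightarrow> real \<Rightarrow> real" where
  "iter_log s x = (ln ^^ s) x"

end

theory Submission imports Defs "HOL-Library.FuncSet" begin


definition rk :: "nat set \<Rightarrow> nat \<Rightarrow> nat" where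
  "rk B b = card {y\<in>B. y < b}"

lemma rk_less:
  assumes "finite B" "a \<in> B" "a < b"
  shows "rk B a < rk B b"
proof -
  have "{y\<in>B. y < a} \<subset> {y\<in>B. y < b}" using assms by auto
  thus ?thesis unfolding rk_def using assms(1) by (simp add: psubset_card_mono)
qed

lemma rk_less_iff:
  assumes "finite B" "a \<in> B" "b \<in> B"
  shows "rk B a < rk B b \<longleftrightarrow> a < b"
proof
  assume h: "rk B a < rk B b"
  show "a < b"
  proof (rule ccontr)
    assume "\<not> a < b"
    then have "b < a \<or> b = a" by auto
    then have "rk B b \<le> rk B a" using rk_less[OF assms(1,3), of a] by auto
    thus False using h by simp
  qed
next
  assume "a < b" thus "rk B a < rk B b" using rk_less[OF assms(1,2)] by simp
qed

lemma rk_inj: "finite B \<Longrightarrow> inj_on (rk B) B"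
proof (rule inj_onI)
  fix a b assume "finite B" "a \<in> B" "b \<in> B" "rk B a = rk B b"
  thus "a = b" using rk_less_iff[of B a b] rk_less_iff[of B b a] by (metis linorder_neqE_nat less_irrefl)
qed

lemma rk_range: assumes "finite B" "b \<in> B" shows "rk B b < card B"
proof -
  have "{y\<in>B. y < b} \<subset> B" using assms by auto
  thus ?thesis unfolding rk_def using assms(1) by (simp add: psubset_card_mono)
qed

lemma rk_bij: assumes "finite B" shows "bij_betw (rk B) B {..<card B}"
proof -
  have "rk B ` B \<subseteq> {..<card B}" using rk_range[OF assms] by auto
  moreover have "card (rk B ` B) = card B" using rk_inj[OF assms] by (simp add: card_image)
  ultimately have "rk B ` B = {..<card B}"
    by (simp add: card_subset_eq)
  thus ?thesis using rk_inj[OF assms] by (simp add: bij_betw_def)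
qed

definition elem :: "nat set \<Rightarrow> nat \<Rightarrow> nat" where
  "elem B j = inv_into B (rk B) j"

lemma elem_props:
  assumes "finite B" "j < card B"
  shows "elem B j \<in> B" "rk B (elem B j) = j"
proof -
  have "j \<in> rk B ` B" using rk_bij[OF assms(1)] assms(2) by (simp add: bij_betw_def)
  thus "elem B j \<in> B" "rk B (elem B j) = j" unfolding elem_def
    by (auto simp: inv_into_into f_inv_into_f)
qed

lemma elem_rk:
  assumes "finite B" "b \<in> B"
  shows "elem B (rk B b) = b"
  unfolding elem_def using rk_inj[OF assms(1)] assms(2) by (simp add: inv_into_f_f)

definition col1 :: "nat \<Rightarrow> nat \<Rightarrow> nat set \<Rightarrow> nat" where
  "col1 r v e = (if v \<in> e then rk e v + 1 else r + rk e v + 1)"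

lemma rk_le_card: "finite e \<Longrightarrow> rk e v \<le> card e"
  unfolding rk_def by (rule card_mono) auto

lemma rk_in: assumes "finite e" "v \<in> e" shows "rk e v < card e"
  using rk_range[OF assms] .

lemma col1_range:
  assumes "finite e" "card e = r"
  shows "col1 r v e \<in> {1..2*r+1}"
  using rk_le_card[OF assms(1), of v] rk_in[OF assms(1), of v] assms(2)
  unfolding col1_def by auto

lemma rk_image:
  assumes "inj_on \<phi> V" "e \<subseteq> V" "x \<in> V"
  shows "rk (\<phi> ` e) (\<phi> x) = card {v\<in>e. \<phi> v < \<phi> x}"
proof -
  have "{y\<in>\<phi> ` e. y < \<phi> x} = \<phi> ` {v\<in>e. \<phi> v < \<phi> x}" by auto
  moreover have "inj_on \<phi> {v\<in>e. \<phi> v < \<phi> x}" by (rule inj_on_subset[OF assms(1)]) (use assms(2) in auto)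
  ultimately show ?thesis unfolding rk_def by (simp add: card_image)
qed

lemma part1:
  assumes "r_graph r V E" "\<not> two_locally_large r V E"
  shows "C_num r n V E \<le> 2 * r + 1"
proof -
  have finV: "finite V" and Esub: "\<And>e. e \<in> E \<Longrightarrow> e \<subseteq> V \<and> card e = r"
    using assms(1) unfolding r_graph_def by auto
  have finE: "finite E" using Esub finV
    by (meson Pow_iff finite_Pow_iff rev_finite_subset subsetI)
  have "local_coloring n r V E (2*r+1) (col1 r)"
    unfolding local_coloring_def
  proof (intro conjI allI impI)
    fix v e assume "v < n" "e \<subseteq> {..<n} \<and> card e = r"
    thus "col1 r v e \<in> {1..2*r+1}"
      using col1_range[of e r v] finite_subset by blast
  next
    fix \<phi> assume \<phi>: "inj_on \<phi> V \<and> \<phi> ` V \<subseteq> {..<n}"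
    define \<sigma> where "\<sigma> x = rk (\<phi> ` V) (\<phi> x) + 1" for x
    have finI: "finite (\<phi> ` V)" using finV by simp
    have cI: "card (\<phi> ` V) = card V" using \<phi> by (simp add: card_image)
    have b1: "bij_betw \<phi> V (\<phi> ` V)" using \<phi> by (simp add: bij_betw_imageI)
    have b2: "bij_betw (rk (\<phi> ` V)) (\<phi> ` V) {..<card V}" using rk_bij[OF finI] cI by simp
    have b3: "bij_betw (\<lambda>j. j + 1) {..<card V} {1..card V}"
      by (simp add: bij_betw_def image_Suc_lessThan)
    have "bij_betw \<sigma> V {1..card V}"
      using bij_betw_trans[OF bij_betw_trans[OF b1 b2] b3] unfolding \<sigma>_def comp_def .
    then obtain x where xV: "x \<in> V" and small: "\<forall>i\<in>{1..2*r+1}. card (T_set r \<sigma> E x i) < 2"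
      using assms(2) unfolding two_locally_large_def by (meson not_le)
    have ordiff: "\<sigma> v < \<sigma> x \<longleftrightarrow> \<phi> v < \<phi> x" if "v \<in> V" for v
      unfolding \<sigma>_def using rk_less_iff[OF finI] that xV by auto
    have key: "e \<in> T_set r \<sigma> E x (col1 r (\<phi> x) (\<phi> ` e))" if "e \<in> E" for e
    proof -
      have eV: "e \<subseteq> V" and ce: "card e = r" using Esub that by auto
      have inj_e: "inj_on \<phi> e" using \<phi> eV inj_on_subset by blast
      have cimg: "card (\<phi> ` e) = r" using ce inj_e by (simp add: card_image)
      have mem: "\<phi> x \<in> \<phi> ` e \<longleftrightarrow> x \<in> e" using \<phi> eV xV by (auto simp: inj_on_def)
      have rkq: "rk (\<phi> ` e) (\<phi> x) = card {v\<in>e. \<sigma> v < \<sigma> x}"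
      proof -
        have "{v\<in>e. \<sigma> v < \<sigma> x} = {v\<in>e. \<phi> v < \<phi> x}" using eV ordiff by auto
        thus ?thesis using rk_image[OF _ eV xV, of \<phi>] \<phi> by simp
      qed
      have fe: "finite (\<phi> ` e)" using finV eV finite_subset by blast
      show ?thesis
      proof (cases "x \<in> e")
        case True
        then have "rk (\<phi> ` e) (\<phi> x) < r" using rk_in[OF fe] mem cimg by auto
        then show ?thesis using True mem rkq that unfolding T_set_def col1_def by auto
      next
        case False
        then show ?thesis using mem rkq that unfolding T_set_def col1_def by auto
      qed
    qed
    have "inj_on (col1 r (\<phi> x)) ((\<lambda>e. \<phi> ` e) ` E)"
    proof (rule inj_onI)
      fix a b assume "a \<in> (\<lambda>e. \<phi> ` e) ` E" "b \<in> (\<lambda>e. \<phi> ` e) ` E"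
        and eq: "col1 r (\<phi> x) a = col1 r (\<phi> x) b"
      then obtain ea eb where ea: "ea \<in> E" "a = \<phi> ` ea" and eb: "eb \<in> E" "b = \<phi> ` eb" by auto
      define i where "i = col1 r (\<phi> x) a"
      have fa: "finite ea" using Esub ea finV finite_subset by blast
      have ca: "card (\<phi> ` ea) = r" using Esub ea \<phi> by (metis card_image inj_on_subset)
      have "i \<in> {1..2*r+1}" unfolding i_def ea(2) using col1_range[of "\<phi> ` ea" r] fa ca by simp
      then have "card (T_set r \<sigma> E x i) < 2" using small by auto
      moreover have "ea \<in> T_set r \<sigma> E x i" "eb \<in> T_set r \<sigma> E x i"
        using key[OF ea(1)] key[OF eb(1)] eq ea eb unfolding i_def by auto
      moreover have "finite (T_set r \<sigma> E x i)" using finE unfolding T_set_def by auto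
      ultimately have "ea = eb"
      proof -
        assume a1: "card (T_set r \<sigma> E x i) < 2" and a2: "ea \<in> T_set r \<sigma> E x i" "eb \<in> T_set r \<sigma> E x i"
          and a3: "finite (T_set r \<sigma> E x i)"
        show "ea = eb"
        proof (rule ccontr)
          assume "ea \<noteq> eb"
          then have "card {ea, eb} = 2" by simp
          moreover have "card {ea, eb} \<le> card (T_set r \<sigma> E x i)" using a2 a3 by (intro card_mono) auto
          ultimately show False using a1 by simp
        qed
      qed
      thus "a = b" using ea eb by simp
    qed
    thus "\<exists>u\<in>\<phi> ` V. inj_on (col1 r u) ((\<lambda>e. \<phi> ` e) ` E)" using xV by blast
  qed
  then have "\<exists>f. local_coloring n r V E (2*r+1) f" by blast
  thus ?thesis unfolding C_num_def by (rule Least_le)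
qed



lemma pigeon:
  assumes "finite S" "finite F" "\<phi> ` S \<subseteq> F" "S \<noteq> {}"
  shows "\<exists>c\<in>F. card S \<le> card F * card {y\<in>S. \<phi> y = c}"
proof -
  have FS: "F \<noteq> {}" using assms(3,4) by auto
  have fin: "finite ((\<lambda>c. card {y\<in>S. \<phi> y = c}) ` F)" using assms(2) by simp
  define Mx where "Mx = Max ((\<lambda>c. card {y\<in>S. \<phi> y = c}) ` F)"
  have "Mx \<in> (\<lambda>c. card {y\<in>S. \<phi> y = c}) ` F" unfolding Mx_def using fin FS by (intro Max_in) auto
  then obtain c where c: "c \<in> F" "Mx = card {y\<in>S. \<phi> y = c}" by auto
  have "S = (\<Union>c\<in>F. {y\<in>S. \<phi> y = c})" using assms(3) by auto
  then have "card S \<le> (\<Sum>c\<in>F. card {y\<in>S. \<phi> y = c})"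
    by (metis card_UN_le assms(2))
  also have "\<dots> \<le> card F * Mx"
    using sum_bounded_above[of F "\<lambda>c. card {y\<in>S. \<phi> y = c}" Mx] fin unfolding Mx_def by auto
  finally show ?thesis using c by auto
qed

lemma arith_step:
  fixes M P cS cF c1 :: nat
  assumes "1 \<le> M" "1 \<le> P" "2 * M * P \<le> cS" "cS - 1 \<le> cF * c1" "cF \<le> M"
  shows "P \<le> c1"
proof (rule ccontr)
  assume "\<not> P \<le> c1"
  then have "c1 + 1 \<le> P" by simp
  then have "M * (c1 + 1) \<le> M * P" by (rule mult_le_mono2)
  then have h1: "M * c1 + M \<le> M * P" by (simp add: algebra_simps)
  have "cF * c1 \<le> M * c1" by (rule mult_le_mono1[OF assms(5)])
  then have h2: "cS - 1 \<le> M * c1" using assms(4) by (rule le_trans[rotated])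
  have h4: "M * P \<ge> 1" using assms(1,2) by simp
  have h3: "2 * (M * P) \<le> cS" using assms(3) by (simp add: mult.assoc)
  show False using h1 h2 h3 h4 assms(1) by linarith
qed

definition good :: "nat \<Rightarrow> (nat set \<Rightarrow> 'c) \<Rightarrow> nat set \<Rightarrow> nat set \<Rightarrow> bool" where
  "good s \<chi> Y0 S \<longleftrightarrow> (\<forall>A. A \<subseteq> Y0 \<and> card A = s \<longrightarrow>
     (\<forall>y\<in>Y0 \<union> S. \<forall>y'\<in>Y0 \<union> S. (\<forall>a\<in>A. a < y) \<longrightarrow> (\<forall>a\<in>A. a < y') \<longrightarrow>
        \<chi> (insert y A) = \<chi> (insert y' A)))"

lemma endhom:
  fixes \<chi> :: "nat set \<Rightarrow> 'c"
  assumes s1: "1 \<le> s" and fC: "finite C" and cC: "card C \<le> K" and K1: "1 \<le> K"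
    and Mdef: "M = K ^ (L ^ (s - 1))"
  shows "finite S \<Longrightarrow> finite Y0 \<Longrightarrow> good s \<chi> Y0 S \<Longrightarrow> (\<forall>y\<in>Y0. \<forall>z\<in>S. y < z) \<Longrightarrow>
    card Y0 + j \<le> L \<Longrightarrow> (2*M)^j \<le> card S \<Longrightarrow>
    (\<forall>A. A \<subseteq> Y0 \<union> S \<and> card A = Suc s \<longrightarrow> \<chi> A \<in> C) \<Longrightarrow>
    \<exists>Y. Y0 \<subseteq> Y \<and> Y \<subseteq> Y0 \<union> S \<and> card Y = card Y0 + j \<and> good s \<chi> Y {}"
proof (induction j arbitrary: Y0 S)
  case 0
  then show ?case by (intro exI[of _ Y0]) (auto simp: good_def)
next
  case (Suc j)
  note fS = Suc.prems(1) and fY0 = Suc.prems(2) and gd = Suc.prems(3) and lt = Suc.prems(4)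
    and cL = Suc.prems(5) and cS = Suc.prems(6) and colC = Suc.prems(7)
  have M1: "1 \<le> M" using K1 Mdef by simp
  have P1: "1 \<le> (2*M)^j" using M1 by simp
  have "2 * M * (2*M)^j \<le> card S" using cS by simp
  then have cS2: "2 \<le> card S" using M1 P1
    by (metis dual_order.trans le_add1 mult_2 mult_le_mono1 nat_mult_1_right mult_le_mono2 mult.assoc)
  then have Sne: "S \<noteq> {}" by auto
  define a where "a = Min S"
  have aS: "a \<in> S" and amin: "\<And>y. y \<in> S \<Longrightarrow> a \<le> y" unfolding a_def using fS Sne by auto
  have aY0: "a \<notin> Y0" using lt aS by auto
  define S' where "S' = S - {a}"
  have fS': "finite S'" and cS': "card S' = card S - 1" unfolding S'_def using fS aS by auto
  have S'ne: "S' \<noteq> {}" using cS' cS2 by auto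
  define D where "D = {A. A \<subseteq> insert a Y0 \<and> a \<in> A \<and> card A = s}"
  have fD: "finite D"
    by (rule finite_subset[of _ "Pow (insert a Y0)"]) (auto simp: D_def fY0)
  have "D \<subseteq> insert a ` {B. B \<subseteq> Y0 \<and> card B = s - 1}"
  proof
    fix A assume A: "A \<in> D"
    then have "A \<subseteq> insert a Y0" "a \<in> A" "card A = s" unfolding D_def by auto
    moreover have "finite A" using fY0 \<open>A \<subseteq> insert a Y0\<close> finite_subset by blast
    ultimately have "A - {a} \<subseteq> Y0" "card (A - {a}) = s - 1" "A = insert a (A - {a})"
      by auto
    thus "A \<in> insert a ` {B. B \<subseteq> Y0 \<and> card B = s - 1}" by blast
  qed
  then have "card D \<le> card (insert a ` {B. B \<subseteq> Y0 \<and> card B = s - 1})"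
    by (intro card_mono) (auto simp: fY0)
  also have "\<dots> \<le> card {B. B \<subseteq> Y0 \<and> card B = s - 1}" by (rule card_image_le) (simp add: fY0)
  also have "\<dots> = card Y0 choose (s - 1)" by (rule n_subsets[OF fY0])
  also have "\<dots> \<le> L ^ (s - 1)"
  proof (cases "s - 1 \<le> card Y0")
    case True
    then have "card Y0 choose (s - 1) \<le> card Y0 ^ (s - 1)" by (rule binomial_le_pow)
    also have "\<dots> \<le> L ^ (s - 1)" using cL by (intro power_mono) auto
    finally show ?thesis .
  next
    case False
    then have "card Y0 < s - 1" by simp
    then have "card Y0 choose (s - 1) = 0" by (rule binomial_eq_0)
    thus ?thesis by (metis le0)
  qed
  finally have cD: "card D \<le> L ^ (s - 1)" .
  define F where "F = PiE D (\<lambda>_. C)"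
  have fF: "finite F" unfolding F_def using fD fC by (simp add: finite_PiE)
  have "card F = card C ^ card D" unfolding F_def using fD by (simp add: card_PiE)
  also have "\<dots> \<le> K ^ card D" using cC by (simp add: power_mono)
  also have "\<dots> \<le> K ^ (L ^ (s - 1))" using K1 cD by (simp add: power_increasing)
  finally have cF: "card F \<le> M" using Mdef by simp
  define \<psi> where "\<psi> y = restrict (\<lambda>A. \<chi> (insert y A)) D" for y
  have yA: "y \<notin> A" if "y \<in> S'" "A \<in> D" for y A
  proof -
    have "y \<notin> Y0" using lt that(1) unfolding S'_def by auto
    moreover have "y \<noteq> a" using that(1) unfolding S'_def by auto
    ultimately show ?thesis using that(2) unfolding D_def by auto
  qed
  have "\<psi> ` S' \<subseteq> F"
  proof
    fix g assume "g \<in> \<psi> ` S'"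
    then obtain y where y: "y \<in> S'" "g = \<psi> y" by auto
    have "\<chi> (insert y A) \<in> C" if "A \<in> D" for A
    proof -
      have "A \<subseteq> insert a Y0" "card A = s" using that unfolding D_def by auto
      moreover have "finite A" using fY0 \<open>A \<subseteq> insert a Y0\<close> finite_subset by blast
      ultimately have "insert y A \<subseteq> Y0 \<union> S" "card (insert y A) = Suc s"
        using yA[OF y(1) that] y(1) aS unfolding S'_def by auto
      thus ?thesis using colC by blast
    qed
    thus "g \<in> F" unfolding F_def y(2) \<psi>_def by auto
  qed
  from pigeon[OF fS' fF this S'ne] obtain c where c: "c \<in> F"
    and ccard: "card S' \<le> card F * card {y\<in>S'. \<psi> y = c}" by blast
  define S1 where "S1 = {y\<in>S'. \<psi> y = c}"
  have S1sub: "S1 \<subseteq> S'" unfolding S1_def by auto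
  have cS1: "(2*M)^j \<le> card S1"
    by (rule arith_step[OF M1 P1 _ _ cF, of "card S"]) (use cS ccard cS' S1_def in auto)
  have gd': "good s \<chi> (insert a Y0) S1"
    unfolding good_def
  proof (intro allI impI ballI)
    fix A y y' assume A: "A \<subseteq> insert a Y0 \<and> card A = s"
      and y: "y \<in> insert a Y0 \<union> S1" and y': "y' \<in> insert a Y0 \<union> S1"
      and ay: "\<forall>b\<in>A. b < y" and ay': "\<forall>b\<in>A. b < y'"
    show "\<chi> (insert y A) = \<chi> (insert y' A)"
    proof (cases "a \<in> A")
      case True
      have "a < y" "a < y'" using ay ay' True by auto
      then have "y \<notin> Y0" "y' \<notin> Y0" using lt aS by (auto dest: less_asym)
      have "y \<in> S1" using y \<open>a < y\<close> \<open>y \<notin> Y0\<close> by auto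
      moreover have "y' \<in> S1" using y' \<open>a < y'\<close> \<open>y' \<notin> Y0\<close> by auto
      moreover have "A \<in> D" using A True unfolding D_def by auto
      ultimately have "\<psi> y A = \<psi> y' A" unfolding S1_def by auto
      thus ?thesis using \<open>A \<in> D\<close> unfolding \<psi>_def by simp
    next
      case False
      then have "A \<subseteq> Y0" using A by auto
      moreover have "y \<in> Y0 \<union> S" "y' \<in> Y0 \<union> S" using y y' aS S1sub unfolding S'_def by auto
      ultimately show ?thesis using gd ay ay' A unfolding good_def by blast
    qed
  qed
  have lt': "\<forall>y\<in>insert a Y0. \<forall>z\<in>S1. y < z"
  proof (intro ballI)
    fix y z assume "y \<in> insert a Y0" "z \<in> S1"
    then have "z \<in> S" "z \<noteq> a" using S1sub unfolding S'_def by auto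
    thus "y < z" using \<open>y \<in> insert a Y0\<close> lt amin[of z] by fastforce
  qed
  have cL': "card (insert a Y0) + j \<le> L" using cL aY0 fY0 by simp
  have fS1: "finite S1" using fS' S1sub finite_subset by blast
  have colC': "\<forall>A. A \<subseteq> insert a Y0 \<union> S1 \<and> card A = Suc s \<longrightarrow> \<chi> A \<in> C"
    using colC aS S1sub unfolding S'_def by blast
  from Suc.IH[OF fS1 _ gd' lt' cL' cS1 colC'] fY0 obtain Y where
    Y: "insert a Y0 \<subseteq> Y" "Y \<subseteq> insert a Y0 \<union> S1" "card Y = card (insert a Y0) + j" "good s \<chi> Y {}"
    by auto
  show ?case
    by (rule exI[of _ Y]) (use Y aS S1sub aY0 fY0 in \<open>auto simp: S'_def\<close>)
qed

fun ram :: "nat \<Rightarrow> nat \<Rightarrow> nat \<Rightarrow> nat" where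
  "ram 0 K m = m"
| "ram (Suc 0) K m = K * m"
| "ram (Suc (Suc s)) K m = 2 ^ (ram (Suc s) K m + 1) * K ^ ((ram (Suc s) K m + 1) ^ Suc s)"

lemma ramsey:
  fixes \<chi> :: "nat set \<Rightarrow> 'c"
  assumes s1: "1 \<le> s" and fC: "finite C" and cC: "card C \<le> K" and K1: "1 \<le> K"
  shows "finite X \<Longrightarrow> ram s K m \<le> card X \<Longrightarrow> (\<forall>A. A \<subseteq> X \<and> card A = s \<longrightarrow> \<chi> A \<in> C) \<Longrightarrow>
    \<exists>Z\<subseteq>X. card Z = m \<and> (\<exists>c. \<forall>A. A \<subseteq> Z \<and> card A = s \<longrightarrow> \<chi> A = c)"
  using s1
proof (induction s arbitrary: X \<chi> rule: nat_induct_at_least)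
  case base
  note fX = base(1) and cX = base(2) and col = base(3)
  show ?case
  proof (cases "X = {}")
    case True
    then have "m = 0" using cX K1 by simp
    thus ?thesis by (intro exI[of _ "{}"]) auto
  next
    case False
    have "(\<lambda>y. \<chi> {y}) ` X \<subseteq> C" using col by auto
    from pigeon[OF fX fC this False] obtain c where c: "c \<in> C"
      and cc: "card X \<le> card C * card {y\<in>X. \<chi> {y} = c}" by blast
    define Y where "Y = {y\<in>X. \<chi> {y} = c}"
    have "K * m \<le> card X" using cX by (simp add: One_nat_def)
    also have "\<dots> \<le> card C * card Y" using cc unfolding Y_def .
    also have "\<dots> \<le> K * card Y" by (rule mult_le_mono1[OF cC])
    finally have "K * m \<le> K * card Y" .
    then have "m \<le> card Y" using K1 by simp
    from obtain_subset_with_card_n[OF this] obtain Z where Z: "Z \<subseteq> Y" "card Z = m" .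
    have "\<forall>A. A \<subseteq> Z \<and> card A = 1 \<longrightarrow> \<chi> A = c"
    proof (intro allI impI)
      fix A assume "A \<subseteq> Z \<and> card A = 1"
      then obtain b where "A = {b}" using card_1_singletonE by blast
      then have "b \<in> Z" using \<open>A \<subseteq> Z \<and> card A = 1\<close> by auto
      thus "\<chi> A = c" using Z \<open>A = {b}\<close> unfolding Y_def by auto
    qed
    thus ?thesis using Z unfolding Y_def by (intro exI[of _ Z]) auto
  qed
next
  case (Suc s)
  note fX = Suc.prems(1) and cX = Suc.prems(2) and col = Suc.prems(3)
  define L where "L = ram s K m + 1"
  define M where "M = K ^ (L ^ (s - 1))"
  obtain s0 where s0: "s = Suc s0" using Suc.hyps(1) by (cases s) auto
  have "(2*M)^L = 2^L * K^(L^(s-1) * L)" unfolding M_def by (simp add: power_mult_distrib power_mult)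
  also have "L^(s-1) * L = L^s" using s0 by simp
  finally have "(2*M)^L = ram (Suc s) K m" unfolding L_def using s0 by simp
  then have cX': "(2*M)^L \<le> card X" using cX by simp
  have g0: "good s \<chi> {} X" unfolding good_def using Suc.hyps(1) by auto
  from endhom[OF Suc.hyps(1) fC cC K1 M_def fX _ g0 _ _ cX'] col
  obtain Y where Y: "Y \<subseteq> X" "card Y = L" "good s \<chi> Y {}" by auto
  have fY: "finite Y" using fX Y(1) finite_subset by blast
  have Yne: "Y \<noteq> {}" using Y(2) L_def by auto
  define z where "z = Max Y"
  have zY: "z \<in> Y" and zmax: "\<And>y. y \<in> Y \<Longrightarrow> y \<le> z" unfolding z_def using fY Yne by auto
  define Y' where "Y' = Y - {z}"
  have fY': "finite Y'" and cY': "card Y' = ram s K m" unfolding Y'_def using fY zY Y(2) L_def by auto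
  define \<chi>' where "\<chi>' A = \<chi> (insert z A)" for A
  have col': "\<forall>A. A \<subseteq> Y' \<and> card A = s \<longrightarrow> \<chi>' A \<in> C"
  proof (intro allI impI)
    fix A assume A: "A \<subseteq> Y' \<and> card A = s"
    have "finite A" using A fY' finite_subset by blast
    moreover have "z \<notin> A" using A unfolding Y'_def by auto
    ultimately have "insert z A \<subseteq> X" "card (insert z A) = Suc s" using A zY Y(1) unfolding Y'_def by auto
    thus "\<chi>' A \<in> C" unfolding \<chi>'_def using col by blast
  qed
  from Suc.IH[OF fY' _ col'] cY' obtain Z c where Z: "Z \<subseteq> Y'" "card Z = m"
    and hc: "\<forall>A. A \<subseteq> Z \<and> card A = s \<longrightarrow> \<chi>' A = c" by auto
  have "\<forall>B. B \<subseteq> Z \<and> card B = Suc s \<longrightarrow> \<chi> B = c"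
  proof (intro allI impI)
    fix B assume B: "B \<subseteq> Z \<and> card B = Suc s"
    have fB: "finite B" by (rule finite_subset[OF _ fY']) (use B Z(1) in auto)
    have Bne: "B \<noteq> {}" using B by auto
    define b where "b = Max B"
    have bB: "b \<in> B" and bmax: "\<And>y. y \<in> B \<Longrightarrow> y \<le> b" unfolding b_def using fB Bne by auto
    define A where "A = B - {b}"
    have cA: "card A = s" unfolding A_def using B bB fB by simp
    have AY: "A \<subseteq> Y" using B Z(1) unfolding A_def Y'_def by auto
    have Ab: "\<forall>a\<in>A. a < b"
    proof
      fix a assume "a \<in> A" then have "a \<in> B" "a \<noteq> b" by (auto simp: A_def)
      thus "a < b" using bmax[of a] by simp
    qed
    have Az: "\<forall>a\<in>A. a < z"
    proof
      fix a assume "a \<in> A" then have "a \<in> Y" "a \<noteq> z" using B Z(1) by (auto simp: A_def Y'_def)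
      thus "a < z" using zmax[of a] by simp
    qed
    have "b \<in> Y" using bB B Z(1) unfolding Y'_def by auto
    then have "\<chi> (insert b A) = \<chi> (insert z A)"
      using Y(3) AY cA Ab Az zY unfolding good_def by blast
    moreover have "insert b A = B" unfolding A_def using bB by auto
    moreover have "A \<subseteq> Z" using B unfolding A_def by auto
    then have "\<chi>' A = c" using hc cA by blast
    ultimately show "\<chi> B = c" unfolding \<chi>'_def by simp
  qed
  thus ?case using Z Y(1) Y'_def by (intro exI[of _ Z]) auto
qed



lemma E_mono: "x \<le> y \<Longrightarrow> (exp ^^ j) x \<le> (exp ^^ j) (y::real)"
  by (induction j) auto

lemma E_pos: "0 \<le> x \<Longrightarrow> 0 \<le> (exp ^^ j) (x::real)"
  by (induction j) auto

lemma exp_add_ge: assumes "0 \<le> (e::real)" "0 \<le> c" shows "exp e + c \<le> exp (e + c)"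
proof -
  have f1: "exp e * (1 + c) \<le> exp e * exp c" using exp_ge_add_one_self[of c] by (simp add: add.commute)
  have "c * 1 \<le> c * exp e" by (rule mult_left_mono) (simp_all add: assms)
  then have "exp e + c \<le> exp e * (1 + c)" by (simp add: algebra_simps)
  moreover have "exp (e + c) = exp e * exp c" by (simp add: exp_add)
  ultimately show ?thesis using f1 by linarith
qed

lemma E_add: "0 \<le> x \<Longrightarrow> 0 \<le> c \<Longrightarrow> (exp ^^ j) x + c \<le> (exp ^^ j) (x + (c::real))"
proof (induction j)
  case 0 then show ?case by simp
next
  case (Suc j)
  have "(exp ^^ Suc j) x + c = exp ((exp ^^ j) x) + c" by simp
  also have "\<dots> \<le> exp ((exp ^^ j) x + c)" by (rule exp_add_ge[OF E_pos[OF Suc.prems(1)] Suc.prems(2)])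
  also have "\<dots> \<le> exp ((exp ^^ j) (x + c))" using Suc by simp
  finally show ?case by simp
qed

lemma E_lin: assumes "1 \<le> d" "1 \<le> x" shows "d * (exp ^^ j) x \<le> (exp ^^ j) (d * (x::real))"
proof (cases j)
  case 0 then show ?thesis by simp
next
  case (Suc i)
  have lnd: "0 \<le> ln d" "ln d \<le> d - 1" using assms(1) by (auto simp: ln_le_minus_one)
  have "d * (exp ^^ j) x = exp (ln d + (exp ^^ i) x)" using Suc assms(1) by (simp add: exp_add)
  also have "\<dots> \<le> exp ((exp ^^ i) (x + ln d))" using E_add[of x "ln d" i] lnd assms(2) by simp
  also have "\<dots> \<le> exp ((exp ^^ i) (d * x))"
  proof -
    have "d - 1 \<le> (d - 1) * x" using mult_left_mono[of 1 x "d - 1"] assms by simp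
    then have "ln d \<le> (d - 1) * x" using lnd by linarith
    then have "x + ln d \<le> d * x" by (simp add: algebra_simps)
    thus ?thesis using E_mono by simp
  qed
  finally show ?thesis using Suc by simp
qed

lemma E_pow: assumes "1 \<le> d" "1 \<le> x"
  shows "((exp ^^ Suc j) x) ^ d \<le> (exp ^^ Suc j) (real d * (x::real))"
proof -
  have "((exp ^^ Suc j) x) ^ d = exp (real d * (exp ^^ j) x)" by (simp add: exp_of_nat_mult)
  also have "\<dots> \<le> exp ((exp ^^ j) (real d * x))" using E_lin[of "real d" x j] assms by simp
  finally show ?thesis by simp
qed

lemma E_mul: assumes "1 \<le> c" "0 \<le> x"
  shows "c * (exp ^^ Suc j) x \<le> (exp ^^ Suc j) (x + (c::real))"
proof -
  have lnc: "0 \<le> ln c" "ln c \<le> c" using assms(1) ln_le_minus_one[of c] by auto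
  have "c * (exp ^^ Suc j) x = exp (ln c + (exp ^^ j) x)" using assms(1) by (simp add: exp_add)
  also have "\<dots> \<le> exp ((exp ^^ j) x + c)" using lnc by simp
  also have "\<dots> \<le> exp ((exp ^^ j) (x + c))" using E_add[of x c j] assms by simp
  finally show ?thesis by simp
qed

lemma L_lower: "(exp ^^ j) t \<le> x \<Longrightarrow> t \<le> (ln ^^ j) (x::real)"
proof (induction j arbitrary: t)
  case 0 then show ?case by simp
next
  case (Suc j)
  have "(exp ^^ j) (exp t) \<le> x" using Suc.prems by (simp add: funpow_Suc_right del: funpow.simps)
  then have "exp t \<le> (ln ^^ j) x" by (rule Suc.IH)
  moreover have "0 < (ln ^^ j) x" using calculation exp_gt_zero[of t] by linarith
  ultimately have "ln (exp t) \<le> ln ((ln ^^ j) x)" using ln_le_cancel_iff[of "exp t" "(ln ^^ j) x"] by simp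
  thus ?case by simp
qed

lemma L_upper: "(\<forall>i<j. 0 < (ln ^^ i) x) \<Longrightarrow> x \<le> (exp ^^ j) y \<Longrightarrow> (ln ^^ j) (x::real) \<le> y"
proof (induction j arbitrary: y)
  case 0 then show ?case by simp
next
  case (Suc j)
  have "x \<le> (exp ^^ j) (exp y)" using Suc.prems(2) by (simp add: funpow_Suc_right del: funpow.simps)
  then have h: "(ln ^^ j) x \<le> exp y" using Suc.IH Suc.prems(1) by simp
  have p: "0 < (ln ^^ j) x" using Suc.prems(1) by simp
  have "ln ((ln ^^ j) x) \<le> ln (exp y)" using h p ln_le_cancel_iff[of "(ln ^^ j) x" "exp y"] by simp
  thus ?case by simp
qed

lemma pow_exp_bound:
  fixes L p K :: nat assumes "1 \<le> K"
  shows "real (2 ^ L * K ^ p) + 1 \<le> exp (real (L + 1) + real p * ln (real K))"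
proof -
  have a: "(1::real) \<le> 2 ^ L" by simp
  have b: "(1::real) \<le> real K ^ p" using assms by (simp add: one_le_power)
  have "(1::real) * 1 \<le> 2 ^ L * real K ^ p" by (rule mult_mono) (use a b in auto)
  moreover have "real (2 ^ L * K ^ p) = 2 ^ L * real K ^ p" by simp
  ultimately have "real (2 ^ L * K ^ p) \<ge> 1" by linarith
  then have "real (2 ^ L * K ^ p) + 1 \<le> 2 * real (2 ^ L * K ^ p)" by linarith
  also have "\<dots> = 2 ^ (L + 1) * real K ^ p" by simp
  also have "\<dots> = exp (real (L + 1) * ln 2) * exp (real p * ln (real K))"
  proof -
    have e1: "exp (real (L + 1) * ln 2) = 2 ^ (L + 1)" by (subst exp_of_nat_mult) simp
    have e2: "exp (real p * ln (real K)) = real K ^ p" using assms by (subst exp_of_nat_mult) simp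
    show ?thesis by (simp only: e1 e2)
  qed
  also have "\<dots> \<le> exp (real (L + 1)) * exp (real p * ln (real K))"
    using ln_2_less_1 by (intro mult_right_mono) auto
  finally show ?thesis by (simp add: exp_add)
qed



lemma ram_bound:
  fixes m :: nat
  shows "\<exists>A\<ge>1. \<forall>K::nat. 1 \<le> K \<longrightarrow>
    real (ram (Suc (Suc t)) K m) + 1 \<le> (exp ^^ Suc t) (A * (real K * (1 + ln (real K))))"
proof (induction t)
  case 0
  show ?case
  proof (intro exI[of _ "real m + 2"] conjI allI impI)
    fix K :: nat assume K1: "1 \<le> K"
    define L where "L = K * m + 1"
    have lnK: "0 \<le> ln (real K)" using K1 by simp
    have "real (ram (Suc (Suc 0)) K m) + 1 = real (2 ^ L * K ^ L) + 1" unfolding L_def by simp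
    also have "\<dots> \<le> exp (real (L + 1) + real L * ln (real K))" by (rule pow_exp_bound[OF K1])
    also have "\<dots> \<le> exp ((real m + 2) * (real K * (1 + ln (real K))))"
    proof -
      have "real (L + 1) \<le> (real m + 2) * real K" unfolding L_def using K1 by (simp add: algebra_simps)
      moreover have "real L \<le> (real m + 2) * real K" unfolding L_def using K1 by (simp add: algebra_simps)
      ultimately have "real (L + 1) + real L * ln (real K) \<le> (real m + 2) * real K + (real m + 2) * real K * ln (real K)"
        using lnK by (intro add_mono mult_right_mono) auto
      thus ?thesis by (simp add: algebra_simps)
    qed
    finally show "real (ram (Suc (Suc 0)) K m) + 1 \<le> (exp ^^ Suc 0) ((real m + 2) * (real K * (1 + ln (real K))))"
      by simp
  qed simp
next
  case (Suc t)
  then obtain A where A1: "1 \<le> A" and IH: "\<And>K::nat. 1 \<le> K \<Longrightarrow>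
    real (ram (Suc (Suc t)) K m) + 1 \<le> (exp ^^ Suc t) (A * (real K * (1 + ln (real K))))" by blast
  define s where "s = Suc (Suc t)"
  show ?case
  proof (intro exI[of _ "real s * A + 2"] conjI allI impI)
    show "1 \<le> real s * A + 2" using A1 by simp
    fix K :: nat assume K1: "1 \<le> K"
    define T where "T = real K * (1 + ln (real K))"
    have lnK: "0 \<le> ln (real K)" using K1 by simp
    have "1 * (1 + ln (real K)) \<le> real K * (1 + ln (real K))"
      by (rule mult_right_mono) (use K1 lnK in auto)
    then have T1: "1 + ln (real K) \<le> T" unfolding T_def by simp
    have T1': "1 \<le> T" using T1 lnK by linarith
    define L where "L = ram s K m + 1"
    have L1: "1 \<le> L" unfolding L_def by simp
    define W where "W = (exp ^^ Suc t) (A * T)"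
    have LW: "real L \<le> W" unfolding L_def W_def T_def using IH[OF K1] s_def by simp
    have AT: "1 \<le> A * T" using mult_mono[of 1 A 1 T] A1 T1' by simp
    have "real (ram (Suc (Suc (Suc t))) K m) + 1 = real (2 ^ L * K ^ (L ^ s)) + 1"
      unfolding L_def s_def by simp
    also have "\<dots> \<le> exp (real (L + 1) + real (L ^ s) * ln (real K))" by (rule pow_exp_bound[OF K1])
    also have "\<dots> \<le> exp (2 * T * W ^ s)"
    proof -
      have "L \<le> L ^ s" by (rule self_le_power) (use L1 s_def in auto)
      then have "real L \<le> real (L ^ s)" by (simp only: of_nat_le_iff)
      moreover have "1 \<le> real L" using L1 by simp
      moreover have "0 \<le> real (L ^ s) * ln (real K)" using lnK by simp
      moreover have "real (L ^ s) * 2 * (1 + ln (real K)) = 2 * real (L ^ s) + 2 * (real (L ^ s) * ln (real K))"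
        by (simp add: algebra_simps)
      moreover have "real (L + 1) = real L + 1" by simp
      ultimately have "real (L + 1) + real (L ^ s) * ln (real K) \<le> real (L ^ s) * 2 * (1 + ln (real K))"
        by linarith
      also have "\<dots> \<le> real (L ^ s) * 2 * T" using T1 by (intro mult_left_mono) auto
      also have "\<dots> \<le> W ^ s * 2 * T"
      proof -
        have "real (L ^ s) \<le> W ^ s" using power_mono[OF LW, of s] by simp
        thus ?thesis using T1' by (intro mult_right_mono) auto
      qed
      finally show ?thesis by (simp add: algebra_simps)
    qed
    also have "\<dots> \<le> exp ((exp ^^ Suc t) ((real s * A + 2) * T))"
    proof -
      have "W ^ s \<le> (exp ^^ Suc t) (real s * (A * T))" unfolding W_def
        by (rule E_pow) (use AT s_def in auto)
      then have "2 * T * W ^ s \<le> 2 * T * (exp ^^ Suc t) (real s * (A * T))"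
        using T1' by (intro mult_left_mono) auto
      also have "\<dots> \<le> (exp ^^ Suc t) (real s * (A * T) + 2 * T)"
        by (rule E_mul) (use T1' AT in auto)
      also have "\<dots> = (exp ^^ Suc t) ((real s * A + 2) * T)" by (simp add: algebra_simps)
      finally show ?thesis by simp
    qed
    finally show "real (ram (Suc (Suc (Suc t))) K m) + 1 \<le> (exp ^^ Suc (Suc t)) ((real s * A + 2) * (real K * (1 + ln (real K))))"
      unfolding T_def by simp
  qed
qed



lemma no_coloring:
  assumes r1: "1 \<le> r" and H: "r_graph r V E" "card V = h" "two_locally_large r V E"
    and lc: "local_coloring n r V E k f" and k1: "1 \<le> k"
    and big: "ram (Suc r) (k ^ (2*r+1)) (h+1) \<le> n"
  shows False
proof -
  have finV: "finite V" and Esub: "\<And>e. e \<in> E \<Longrightarrow> e \<subseteq> V \<and> card e = r"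
    using H(1) unfolding r_graph_def by auto
  have finE: "finite E" using Esub finV
    by (meson Pow_iff finite_Pow_iff rev_finite_subset subsetI)
  define X where "X = {..<n}"
  define P where "P = {(j,l). j \<le> r \<and> l \<le> r \<and> (l = j \<or> l = r)}"
  define \<chi> where "\<chi> B = restrict (\<lambda>p. f (elem B (fst p)) (B - {elem B (snd p)})) P" for B
  define C where "C = PiE P (\<lambda>_. {1..k})"
  have PS: "P \<subseteq> (\<lambda>j. (j,j)) ` {..r} \<union> (\<lambda>j. (j,r)) ` {..<r}"
    unfolding P_def by (auto simp: image_iff le_neq_implies_less)
  have fP: "finite P" by (rule finite_subset[OF PS]) auto
  have "card P \<le> card ((\<lambda>j. (j,j)) ` {..r} \<union> (\<lambda>j. (j,r)) ` {..<r})" by (rule card_mono[OF _ PS]) auto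
  also have "\<dots> \<le> card ((\<lambda>j. (j,j)) ` {..r}) + card ((\<lambda>j. (j,r)) ` {..<r})" by (rule card_Un_le)
  also have "\<dots> \<le> card {..r} + card {..<r}" by (intro add_mono card_image_le) auto
  finally have cP: "card P \<le> 2*r+1" by simp
  have fC: "finite C" unfolding C_def using fP by (simp add: finite_PiE)
  have "card C = k ^ card P" unfolding C_def using fP by (simp add: card_PiE)
  also have "\<dots> \<le> k ^ (2*r+1)" by (rule power_increasing[OF cP]) (use k1 in simp)
  finally have cC: "card C \<le> k ^ (2*r+1)" .
  have K1: "1 \<le> k ^ (2*r+1)" using k1 by simp
  have col: "\<forall>B. B \<subseteq> X \<and> card B = Suc r \<longrightarrow> \<chi> B \<in> C"
  proof (intro allI impI)
    fix B assume B: "B \<subseteq> X \<and> card B = Suc r"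
    have fB: "finite B" using B unfolding X_def using finite_subset by blast
    have "f (elem B j) (B - {elem B l}) \<in> {1..k}" if "(j,l) \<in> P" for j l
    proof -
      have jl: "j < card B" "l < card B" using that B unfolding P_def by auto
      have "elem B j \<in> B" "elem B l \<in> B" using elem_props(1)[OF fB] jl by auto
      then have "elem B j < n" "B - {elem B l} \<subseteq> {..<n}" "card (B - {elem B l}) = r"
        using B fB unfolding X_def by auto
      thus ?thesis using lc unfolding local_coloring_def by blast
    qed
    thus "\<chi> B \<in> C" unfolding \<chi>_def C_def by auto
  qed
  have fX: "finite X" and cX: "card X = n" unfolding X_def by auto
  from ramsey[of "Suc r" C "k ^ (2*r+1)" X "h+1" \<chi>] fC cC K1 fX cX big col
  obtain Z c where Z: "Z \<subseteq> X" "card Z = h + 1" and hc: "\<forall>B. B \<subseteq> Z \<and> card B = Suc r \<longrightarrow> \<chi> B = c"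
    by auto
  have fZ: "finite Z" using Z(1) fX finite_subset by blast
  obtain \<sigma> where bs: "bij_betw \<sigma> V {1..card V}"
    and ll: "\<forall>x\<in>V. \<exists>i\<in>{1..2*r+1}. card (T_set r \<sigma> E x i) \<ge> 2"
    using H(3) unfolding two_locally_large_def by blast
  have \<sigma>r: "\<sigma> v \<in> {1..h}" if "v \<in> V" for v using bs that H(2) by (auto simp: bij_betw_def)
  have \<sigma>inj: "inj_on \<sigma> V" using bs by (simp add: bij_betw_def)
  define zt where "zt = elem Z h"
  have ztZ: "zt \<in> Z" and rzt: "rk Z zt = h" unfolding zt_def using elem_props[OF fZ] Z(2) by auto
  define \<phi> where "\<phi> v = elem Z (\<sigma> v - 1)" for v
  have \<phi>Z: "\<phi> v \<in> Z" and r\<phi>: "rk Z (\<phi> v) = \<sigma> v - 1" if "v \<in> V" for v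
    unfolding \<phi>_def using elem_props[OF fZ, of "\<sigma> v - 1"] \<sigma>r[OF that] Z(2) by auto
  have \<phi>zt: "\<phi> v < zt" if "v \<in> V" for v
    using rk_less_iff[OF fZ \<phi>Z[OF that] ztZ] r\<phi>[OF that] rzt \<sigma>r[OF that] by auto
  have ord: "\<phi> v < \<phi> x \<longleftrightarrow> \<sigma> v < \<sigma> x" if "v \<in> V" "x \<in> V" for v x
    using rk_less_iff[OF fZ \<phi>Z[OF that(1)] \<phi>Z[OF that(2)]] r\<phi>[OF that(1)] r\<phi>[OF that(2)]
      \<sigma>r[OF that(1)] \<sigma>r[OF that(2)] by auto
  have \<phi>inj: "inj_on \<phi> V"
  proof (rule inj_onI)
    fix v w assume "v \<in> V" "w \<in> V" "\<phi> v = \<phi> w"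
    then have "\<sigma> v - 1 = \<sigma> w - 1" using r\<phi> by metis
    then have "\<sigma> v = \<sigma> w" using \<sigma>r[OF \<open>v \<in> V\<close>] \<sigma>r[OF \<open>w \<in> V\<close>] by auto
    thus "v = w" using \<sigma>inj \<open>v \<in> V\<close> \<open>w \<in> V\<close> by (simp add: inj_on_eq_iff)
  qed
  have \<phi>X: "\<phi> ` V \<subseteq> {..<n}" using \<phi>Z Z(1) unfolding X_def by auto
  obtain u where uV: "u \<in> \<phi> ` V" and uinj: "inj_on (f u) ((\<lambda>e. \<phi> ` e) ` E)"
    using lc \<phi>inj \<phi>X unfolding local_coloring_def by blast
  then obtain x where xV: "x \<in> V" and ux: "u = \<phi> x" by auto
  from ll xV obtain i where i: "i \<in> {1..2*r+1}" and ci: "card (T_set r \<sigma> E x i) \<ge> 2" by blast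
  define p where "p = (if i \<le> r then (i - 1, r) else (i - r - 1, i - r - 1))"
  have key: "f (\<phi> x) (\<phi> ` e) = c p" if eT: "e \<in> T_set r \<sigma> E x i" for e
  proof -
    have eE: "e \<in> E" using eT unfolding T_set_def by (auto split: if_splits)
    have eV: "e \<subseteq> V" and ce: "card e = r" using Esub[OF eE] by auto
    have fe: "finite e" using eV finV finite_subset by blast
    have cie: "card (\<phi> ` e) = r" using ce \<phi>inj eV by (metis card_image inj_on_subset)
    have rke: "card {y\<in>\<phi> ` e. y < \<phi> x} = card {v\<in>e. \<sigma> v < \<sigma> x}"
    proof -
      have "card {y\<in>\<phi> ` e. y < \<phi> x} = card {v\<in>e. \<phi> v < \<phi> x}"
        using rk_image[OF \<phi>inj eV xV] unfolding rk_def .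
      also have "{v\<in>e. \<phi> v < \<phi> x} = {v\<in>e. \<sigma> v < \<sigma> x}" using ord eV xV by auto
      finally show ?thesis .
    qed
    have eZ: "\<phi> ` e \<subseteq> Z" using \<phi>Z eV by auto
    show ?thesis
    proof (cases "i \<le> r")
      case True
      then have xe: "x \<in> e" and cnt: "card {v\<in>e. \<sigma> v < \<sigma> x} + 1 = i"
        using eT unfolding T_set_def by auto
      define B where "B = insert zt (\<phi> ` e)"
      have ztn: "zt \<notin> \<phi> ` e" using \<phi>zt eV by auto
      have fB: "finite B" unfolding B_def using fe by simp
      have BZ: "B \<subseteq> Z" unfolding B_def using eZ ztZ by auto
      have cB: "card B = Suc r" unfolding B_def using ztn cie fe by simp
      have \<phi>xB: "\<phi> x \<in> B" unfolding B_def using xe by auto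
      have "{y\<in>B. y < \<phi> x} = {y\<in>\<phi> ` e. y < \<phi> x}" unfolding B_def using \<phi>zt[OF xV] by auto
      then have "rk B (\<phi> x) = i - 1" unfolding rk_def using rke cnt by simp
      then have e1: "elem B (i - 1) = \<phi> x" using elem_rk[OF fB \<phi>xB] by simp
      have "{y\<in>B. y < zt} = \<phi> ` e" unfolding B_def using \<phi>zt eV by auto
      then have "rk B zt = r" unfolding rk_def using cie by simp
      then have e2: "elem B r = zt" using elem_rk[OF fB] unfolding B_def by force
      have pP: "p \<in> P" unfolding p_def P_def using True by auto
      have "\<chi> B = c" using hc BZ cB by blast
      then have "c p = f (elem B (i - 1)) (B - {elem B r})"
        unfolding \<chi>_def p_def using pP True by (auto simp: p_def)
      also have "\<dots> = f (\<phi> x) (\<phi> ` e)" using e1 e2 ztn unfolding B_def by simp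
      finally show ?thesis by simp
    next
      case False
      then have xe: "x \<notin> e" and cnt: "card {v\<in>e. \<sigma> v < \<sigma> x} + 1 = i - r"
        using eT unfolding T_set_def by auto
      define B where "B = insert (\<phi> x) (\<phi> ` e)"
      have xn: "\<phi> x \<notin> \<phi> ` e" using xe \<phi>inj eV xV by (auto simp: inj_on_eq_iff)
      have fB: "finite B" unfolding B_def using fe by simp
      have BZ: "B \<subseteq> Z" unfolding B_def using eZ \<phi>Z[OF xV] by auto
      have cB: "card B = Suc r" unfolding B_def using xn cie fe by simp
      have \<phi>xB: "\<phi> x \<in> B" unfolding B_def by auto
      have "{y\<in>B. y < \<phi> x} = {y\<in>\<phi> ` e. y < \<phi> x}" unfolding B_def by auto
      then have "rk B (\<phi> x) = i - r - 1" unfolding rk_def using rke cnt by simp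
      then have e1: "elem B (i - r - 1) = \<phi> x" using elem_rk[OF fB \<phi>xB] by simp
      have pP: "p \<in> P" unfolding p_def P_def using False i by auto
      have "\<chi> B = c" using hc BZ cB by blast
      then have "c p = f (elem B (i - r - 1)) (B - {elem B (i - r - 1)})"
        unfolding \<chi>_def using pP False by (auto simp: p_def)
      also have "\<dots> = f (\<phi> x) (\<phi> ` e)" using e1 xn unfolding B_def by simp
      finally show ?thesis by simp
    qed
  qed
  have finT: "finite (T_set r \<sigma> E x i)" using finE unfolding T_set_def by auto
  obtain e1 where e1: "e1 \<in> T_set r \<sigma> E x i" using ci by (metis card.empty ex_in_conv not_numeral_le_zero)
  have "card (T_set r \<sigma> E x i - {e1}) \<ge> 1" using ci finT e1 by simp
  then obtain e2 where e2: "e2 \<in> T_set r \<sigma> E x i" "e2 \<noteq> e1"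
    by (metis card.empty Diff_iff ex_in_conv not_one_le_zero singletonI)
  have e1E: "e1 \<in> E" and e2E: "e2 \<in> E" using e1 e2 unfolding T_set_def by (auto split: if_splits)
  have "\<phi> ` e1 \<noteq> \<phi> ` e2" using e2(2) Esub[OF e1E] Esub[OF e2E] \<phi>inj
    by (metis inj_on_image_eq_iff)
  moreover have "f u (\<phi> ` e1) = f u (\<phi> ` e2)" using key[OF e1] key[OF e2(1)] ux by simp
  moreover have "\<phi> ` e1 \<in> (\<lambda>e. \<phi> ` e) ` E" "\<phi> ` e2 \<in> (\<lambda>e. \<phi> ` e) ` E" using e1E e2E by auto
  ultimately show False using uinj by (meson inj_onD)
qed



lemma exists_coloring:
  assumes "V \<noteq> {}" and EV: "\<forall>e\<in>E. e \<subseteq> V"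
  shows "\<exists>k f. local_coloring n r V E k f"
proof -
  define S where "S = Pow {..<n}"
  have fS: "finite S" unfolding S_def by simp
  obtain g where g: "bij_betw g {0..<card S} S" using ex_bij_betw_nat_finite[OF fS] by blast
  define f where "f v e = inv_into {0..<card S} g e + 1" for v :: nat and e
  have fr: "f v e \<in> {1..card S}" if "e \<in> S" for v e
  proof -
    have "inv_into {0..<card S} g e \<in> {0..<card S}" using g that
      by (metis bij_betw_def inv_into_into)
    thus ?thesis unfolding f_def by auto
  qed
  have finj: "inj_on (f v) S" for v
  proof -
    have "inj_on (inv_into {0..<card S} g) S" using g by (simp add: bij_betw_def inj_on_inv_into)
    thus ?thesis unfolding f_def inj_on_def by simp
  qed
  have "local_coloring n r V E (card S) f"
    unfolding local_coloring_def
  proof (intro conjI allI impI)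
    fix v e assume "v < n" "e \<subseteq> {..<n} \<and> card e = r"
    thus "f v e \<in> {1..card S}" using fr unfolding S_def by auto
  next
    fix \<phi> assume \<phi>: "inj_on \<phi> V \<and> \<phi> ` V \<subseteq> {..<n}"
    obtain x where "x \<in> V" using assms by auto
    moreover have "(\<lambda>e. \<phi> ` e) ` E \<subseteq> S" using \<phi> EV unfolding S_def by blast
    ultimately show "\<exists>u\<in>\<phi> ` V. inj_on (f u) ((\<lambda>e. \<phi> ` e) ` E)"
      using finj inj_on_subset by blast
  qed
  thus ?thesis by blast
qed



lemma E_ge: "0 \<le> x \<Longrightarrow> x \<le> (exp ^^ j) (x::real)"
proof (induction j)
  case 0 then show ?case by simp
next
  case (Suc j)
  have "(exp ^^ j) x \<le> exp ((exp ^^ j) x)" using exp_ge_add_one_self[of "(exp ^^ j) x"] by linarith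
  thus ?case using Suc by simp
qed

lemma part2:
  fixes r h :: nat
  assumes r1: "r \<ge> 1" and h1: "h \<ge> 1"
  shows "\<exists>c>0. \<exists>N. \<forall>V E. r_graph r V E \<and> card V = h \<and> two_locally_large r V E \<longrightarrow>
            (\<forall>n\<ge>N. real (C_num r n V E) \<ge>
               c * (iter_log r (real n) / iter_log (r + 1) (real n)) powr (1 / real ((r + 1)^2)))"
proof -
  obtain t where t: "r = Suc t" using r1 by (cases r) auto
  obtain A where A1: "1 \<le> A" and Ab: "\<And>K::nat. 1 \<le> K \<Longrightarrow>
      real (ram (Suc r) K (h+1)) + 1 \<le> (exp ^^ r) (A * (real K * (1 + ln (real K))))"
    using ram_bound[of t "h+1"] t by auto
  define q where "q = (r + 1)^2"
  define D where "D = A * (2 * real r + 2)"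
  have D1: "1 \<le> D" unfolding D_def using A1 mult_mono[of 1 A 1 "2 * real r + 2"] by simp
  define c where "c = 1 / D powr (1 / real q)"
  have cpos: "c > 0" unfolding c_def using D1 by simp
  define X where "X = (exp ^^ Suc r) (1::real)"
  define N where "N = max r (nat \<lceil>X\<rceil>)"
  show ?thesis
  proof (intro exI[of _ c] conjI exI[of _ N] allI impI)
    show "0 < c" by (rule cpos)
    fix V E n assume H: "r_graph r V E \<and> card V = h \<and> two_locally_large r V E" and nN: "N \<le> n"
    have "nat \<lceil>X\<rceil> \<le> N" unfolding N_def by simp
    then have "nat \<lceil>X\<rceil> \<le> n" using nN by (rule le_trans)
    then have "real (nat \<lceil>X\<rceil>) \<le> real n" by (simp only: of_nat_le_iff)
    then have "X \<le> real n" using real_nat_ceiling_ge[of X] by linarith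
    then have nbig: "(exp ^^ Suc r) 1 \<le> real n" unfolding X_def .
    have nr: "r \<le> n" using nN unfolding N_def by simp
    have "1 \<le> (exp ^^ Suc r) (1::real)" using E_ge[of 1 "Suc r"] by simp
    then have n1: "1 \<le> n" using nbig by linarith
    have finV: "finite V" and EV: "\<forall>e\<in>E. e \<subseteq> V" using H unfolding r_graph_def by auto
    have Vne: "V \<noteq> {}" using H h1 by auto
    define k where "k = C_num r n V E"
    have "\<exists>f. local_coloring n r V E k f"
      unfolding k_def C_num_def using exists_coloring[OF Vne EV, of n r] by (rule LeastI_ex)
    then obtain f where lc: "local_coloring n r V E k f" by blast
    have "f 0 {..<r} \<in> {1..k}" using lc n1 nr unfolding local_coloring_def by auto
    then have k1: "1 \<le> k" by auto
    define K where "K = k ^ (2*r+1)"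
    have K1: "1 \<le> K" unfolding K_def using k1 by simp
    have "\<not> ram (Suc r) K (h+1) \<le> n"
      using no_coloring[OF r1 _ _ _ lc k1] H unfolding K_def by blast
    then have "real n \<le> real (ram (Suc r) K (h+1))" by simp
    also have "\<dots> \<le> (exp ^^ r) (A * (real K * (1 + ln (real K))))" using Ab[OF K1] by simp
    finally have nle: "real n \<le> (exp ^^ r) (A * (real K * (1 + ln (real K))))" .
    have lgpos: "1 \<le> (ln ^^ i) (real n)" if "i \<le> Suc r" for i
    proof (rule L_lower)
      have "(exp ^^ (i + (Suc r - i))) (1::real) = (exp ^^ i) ((exp ^^ (Suc r - i)) 1)"
        by (simp add: funpow_add)
      moreover have "i + (Suc r - i) = Suc r" using that by simp
      moreover have "(exp ^^ i) 1 \<le> (exp ^^ i) ((exp ^^ (Suc r - i)) (1::real))"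
        by (rule E_mono) (rule E_ge, simp)
      ultimately show "(exp ^^ i) 1 \<le> real n" using nbig by simp
    qed
    define y where "y = iter_log r (real n)"
    define z where "z = iter_log (r + 1) (real n)"
    have y1: "1 \<le> y" unfolding y_def iter_log_def using lgpos[of r] by simp
    have z1: "1 \<le> z" unfolding z_def iter_log_def using lgpos[of "Suc r"] by simp
    have "y \<le> A * (real K * (1 + ln (real K)))" unfolding y_def iter_log_def
    proof (rule L_upper)
      show "\<forall>i<r. 0 < (ln ^^ i) (real n)" using lgpos by (metis less_imp_le_nat le_SucI zero_less_one order_less_le_trans)
      show "real n \<le> (exp ^^ r) (A * (real K * (1 + ln (real K))))" by (rule nle)
    qed
    also have "\<dots> \<le> D * real k ^ q"
    proof -
      have kpos: "0 < real k" using k1 by simp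
      have "ln (real K) = ln (real k ^ (2*r+1))" unfolding K_def by (simp only: of_nat_power)
      also have "\<dots> = real (2*r+1) * ln (real k)" by (rule ln_realpow)
      finally have lnK: "ln (real K) = real (2*r+1) * ln (real k)" .
      have "ln (real k) \<le> real k - 1" using ln_le_minus_one kpos by simp
      moreover have "0 \<le> ln (real k)" using k1 by simp
      ultimately have "real (2*r+1) * ln (real k) \<le> real (2*r+1) * (real k - 1)" by (intro mult_left_mono) auto
      then have "1 + ln (real K) \<le> (2 * real r + 2) * real k" using lnK k1 by (simp add: algebra_simps)
      then have "real K * (1 + ln (real K)) \<le> real K * ((2 * real r + 2) * real k)"
        by (intro mult_left_mono) auto
      also have "\<dots> = (2 * real r + 2) * real k ^ (2*r+2)" unfolding K_def by (simp add: algebra_simps)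
      also have "\<dots> \<le> (2 * real r + 2) * real k ^ q"
      proof -
        have "2*r+2 \<le> q" unfolding q_def using r1 by (simp add: power2_eq_square algebra_simps)
        then have "real k ^ (2*r+2) \<le> real k ^ q" using k1 by (intro power_increasing) auto
        thus ?thesis by (intro mult_left_mono) auto
      qed
      finally have "real K * (1 + ln (real K)) \<le> (2 * real r + 2) * real k ^ q" .
      then have "A * (real K * (1 + ln (real K))) \<le> A * ((2 * real r + 2) * real k ^ q)"
        using A1 by (intro mult_left_mono) auto
      thus ?thesis unfolding D_def by (simp add: algebra_simps)
    qed
    finally have yD: "y \<le> D * real k ^ q" .
    have "y / z \<le> y"
    proof -
      have "y * 1 \<le> y * z" using y1 z1 by (intro mult_left_mono) auto
      thus ?thesis using z1 by (simp add: divide_le_eq)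
    qed
    then have yzD: "y / z \<le> D * real k ^ q" using yD by linarith
    have yz0: "0 \<le> y / z" using y1 z1 by simp
    have "(y / z) powr (1 / real q) \<le> (D * real k ^ q) powr (1 / real q)"
      by (rule powr_mono2) (use yz0 yzD in auto)
    also have "\<dots> = D powr (1 / real q) * (real k ^ q) powr (1 / real q)"
      using D1 by (simp add: powr_mult)
    also have "(real k ^ q) powr (1 / real q) = real k"
    proof -
      have kpos: "0 < real k" using k1 by simp
      have q0: "q \<noteq> 0" unfolding q_def by simp
      have "real k ^ q = real k powr real q" using kpos by (simp add: powr_realpow)
      then have "(real k ^ q) powr (1 / real q) = real k powr (real q * (1 / real q))"
        by (simp add: powr_powr)
      also have "\<dots> = real k" using q0 kpos by simp
      finally show ?thesis .
    qed
    finally have "(y / z) powr (1 / real q) \<le> D powr (1 / real q) * real k" .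
    then have "c * (y / z) powr (1 / real q) \<le> c * (D powr (1 / real q) * real k)"
      using cpos by (intro mult_left_mono) auto
    also have "\<dots> = real k" unfolding c_def using D1 by simp
    finally show "c * (iter_log r (real n) / iter_log (r + 1) (real n)) powr (1 / real ((r + 1)^2)) \<le> real (C_num r n V E)"
      unfolding y_def z_def q_def k_def by simp
  qed
qed



theorem theorem8:
  fixes r h :: nat
  assumes "r \<ge> 1" "h \<ge> 1"
  shows "(\<forall>V E. r_graph r V E \<and> card V = h \<and> \<not> two_locally_large r V E \<longrightarrow>
            (\<forall>n. C_num r n V E \<le> 2 * r + 1))
       \<and> (\<exists>c>0. \<exists>N. \<forall>V E. r_graph r V E \<and> card V = h \<and> two_locally_large r V E \<longrightarrow>
            (\<forall>n\<ge>N. real (C_num r n V E) \<ge>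
               c * (iter_log r (real n) / iter_log (r + 1) (real n)) powr (1 / real ((r + 1)^2))))"
proof
  show "\<forall>V E. r_graph r V E \<and> card V = h \<and> \<not> two_locally_large r V E \<longrightarrow>
            (\<forall>n. C_num r n V E \<le> 2 * r + 1)"
    using part1 by blast
  show "\<exists>c>0. \<exists>N. \<forall>V E. r_graph r V E \<and> card V = h \<and> two_locally_large r V E \<longrightarrow>
            (\<forall>n\<ge>N. real (C_num r n V E) \<ge>
               c * (iter_log r (real n) / iter_log (r + 1) (real n)) powr (1 / real ((r + 1)^2)))"
    by (rule part2[OF assms])
qed


end
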